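(* Let $(T_1,T_2,V)$ on $\mathcal K\supseteq\mathcal H$ be a $\Gamma_3$-isometric dilation of a $\Gamma_3$-contraction $(S_1,S_2,P)$ on $\mathcal H$. If $(T_1,T_2,V)$ is minimal, then $(T_1^*,T_2^*,V^* )$ is a $\Gamma_3$-co-isometric extension of $(S_1^*,S_2^*,P^* )$, i.e. $\mathcal H$ is invariant under $T_1^*,T_2^*,V^*$ and $T_1^*|_{\mathcal H}=S_1^*$, $T_2^*|_{\mathcal H}=S_2^*$, $V^*|_{\mathcal H}=P^*$. Conversely, if $(T_1,T_2,V)$ is a $\Gamma_3$-isometry on $\mathcal K\supseteq\mathcal H$ such that $(T_1^*,T_2^*,V^* )$ is a $\Gamma_3$-co-isometric extension of $(S_1^*,S_2^*,P^* )$, then $(T_1,T_2,V)$ is a $\Gamma_3$-isometric dilation of $(S_1,S_2,P)$.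
   Context: $\Gamma_3=\{(z_1+z_2+z_3,\,z_1z_2+z_2z_3+z_3z_1,\,z_1z_2z_3):|z_i|\le1\}$, $b\Gamma_3$ the same with $|z_i|=1$. A $\Gamma_3$-contraction is a commuting operator triple with Taylor joint spectrum in $\Gamma_3$ and $\|f(S_1,S_2,P)\|\le\sup_{\Gamma_3}|f|$ for rational $f$ with poles off $\Gamma_3$; a $\Gamma_3$-unitary is a commuting normal triple with Taylor joint spectrum in $b\Gamma_3$; a $\Gamma_3$-isometry is the restriction of a $\Gamma_3$-unitary to a common invariant subspace; a $\Gamma_3$-co-isometry is a triple whose adjoint triple is a $\Gamma_3$-isometry. A $\Gamma_3$-isometric dilation of $(S_1,S_2,P)$ is a $\Gamma_3$-isometry $(T_1,T_2,V)$ on $\mathcal K\supseteq\mathcal H$ with $P_{\mathcal H}T_1^{m_1}T_2^{m_2}V^n|_{\mathcal H}=S_1^{m_1}S_2^{m_2}P^n$ for all integers $m_1,m_2,n\ge0$; it is minimal if $\mathcal K$ is the closed linear span of $\{T_1^{m_1}T_2^{m_2}V^nh:h\in\mathcal H,\ m_1,m_2,n\ge0\}$. *)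

theory Defs
  imports "HOL-Analysis.Analysis"
begin

text \<open>The distribution has no complex inner product spaces, so we introduce them
as a type class: a real normed vector space with a compatible complex scalar
multiplication and a complex inner product (linear in the second argument)
inducing the norm.\<close>

class complex_inner = real_normed_vector +
  fixes scaleC :: "complex \<Rightarrow> 'a \<Rightarrow> 'a"
    and cinner :: "'a \<Rightarrow> 'a \<Rightarrow> complex"
  assumes scaleC_add_right: "scaleC a (x + y) = scaleC a x + scaleC a y"
    and scaleC_add_left: "scaleC (a + b) x = scaleC a x + scaleC b x"
    and scaleC_scaleC: "scaleC a (scaleC b x) = scaleC (a * b) x"
    and scaleC_one: "scaleC 1 x = x"
    and scaleR_scaleC: "scaleR r x = scaleC (complex_of_real r) x"
    and cinner_conj: "cinner x y = cnj (cinner y x)"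
    and cinner_add_right: "cinner x (y + z) = cinner x y + cinner x z"
    and cinner_scaleC_right: "cinner x (scaleC a y) = a * cinner x y"
    and cinner_self_norm: "cinner x x = complex_of_real ((norm x)\<^sup>2)"

class chilbert = complex_inner + complete_space

instantiation complex :: complex_inner
begin
definition scaleC_complex :: "complex \<Rightarrow> complex \<Rightarrow> complex" where
  "scaleC_complex a x = a * x"
definition cinner_complex :: "complex \<Rightarrow> complex \<Rightarrow> complex" where
  "cinner_complex x y = cnj x * y"
instance proof
  fix a b x y z :: complex and r :: real
  show "scaleC a (x + y) = scaleC a x + scaleC a y" by (simp add: scaleC_complex_def algebra_simps)
  show "scaleC (a + b) x = scaleC a x + scaleC b x" by (simp add: scaleC_complex_def algebra_simps)
  show "scaleC a (scaleC b x) = scaleC (a * b) x" by (simp add: scaleC_complex_def algebra_simps)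
  show "scaleC 1 x = x" by (simp add: scaleC_complex_def)
  show "scaleR r x = scaleC (complex_of_real r) x" by (simp add: scaleC_complex_def scaleR_conv_of_real)
  show "cinner x y = cnj (cinner y x)" by (simp add: cinner_complex_def mult.commute)
  show "cinner x (y + z) = cinner x y + cinner x z" by (simp add: cinner_complex_def algebra_simps)
  show "cinner x (scaleC a y) = a * cinner x y" by (simp add: cinner_complex_def scaleC_complex_def algebra_simps)
  show "cinner x x = complex_of_real ((norm x)\<^sup>2)" by (simp add: cinner_complex_def complex_norm_square[symmetric] mult.commute)
qed
end

instance complex :: chilbert ..

definition csubspace :: "'a::complex_inner set \<Rightarrow> bool" where
  "csubspace M \<longleftrightarrow> 0 \<in> M \<and> (\<forall>x\<in>M. \<forall>y\<in>M. x + y \<in> M) \<and> (\<forall>c. \<forall>x\<in>M. scaleC c x \<in> M)"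

definition closed_csubspace :: "'a::complex_inner set \<Rightarrow> bool" where
  "closed_csubspace M \<longleftrightarrow> csubspace M \<and> closed M"

definition cspan :: "'a::complex_inner set \<Rightarrow> 'a set" where
  "cspan S = {x. \<exists>F c. finite F \<and> F \<subseteq> S \<and> x = (\<Sum>v\<in>F. scaleC (c v) v)}"

text \<open>A bounded linear operator on the closed subspace M (values outside M irrelevant).\<close>
definition bounded_op_on :: "'a::complex_inner set \<Rightarrow> ('a \<Rightarrow> 'a) \<Rightarrow> bool" where
  "bounded_op_on M T \<longleftrightarrow> (\<forall>x\<in>M. T x \<in> M)
     \<and> (\<forall>x\<in>M. \<forall>y\<in>M. T (x + y) = T x + T y)
     \<and> (\<forall>c. \<forall>x\<in>M. T (scaleC c x) = scaleC c (T x))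
     \<and> (\<exists>C. \<forall>x\<in>M. norm (T x) \<le> C * norm x)"

definition adj_on :: "'a::complex_inner set \<Rightarrow> ('a \<Rightarrow> 'a) \<Rightarrow> 'a \<Rightarrow> 'a" where
  "adj_on M T = (\<lambda>y. THE z. z \<in> M \<and> (\<forall>x\<in>M. cinner (T x) y = cinner x z))"

definition proj_on :: "'a::complex_inner set \<Rightarrow> 'a \<Rightarrow> 'a" where
  "proj_on M x = (THE y. y \<in> M \<and> (\<forall>z\<in>M. cinner z (x - y) = 0))"

definition inv_op_on :: "'a set \<Rightarrow> ('a \<Rightarrow> 'a) \<Rightarrow> 'a \<Rightarrow> 'a" where
  "inv_op_on M A x = (THE y. y \<in> M \<and> A y = x)"

definition commute_on :: "'a set \<Rightarrow> ('a \<Rightarrow> 'a) \<Rightarrow> ('a \<Rightarrow> 'a) \<Rightarrow> bool" where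
  "commute_on M A B \<longleftrightarrow> (\<forall>x\<in>M. A (B x) = B (A x))"

definition normal_on :: "'a::complex_inner set \<Rightarrow> ('a \<Rightarrow> 'a) \<Rightarrow> bool" where
  "normal_on M T \<longleftrightarrow> (\<forall>x\<in>M. T (adj_on M T x) = adj_on M T (T x))"

text \<open>Koszul complex of a triple (A1,A2,A3) on M:
  0 \<rightarrow> M \<rightarrow> M^3 \<rightarrow> M^3 \<rightarrow> M \<rightarrow> 0 with maps
  x \<mapsto> (A1 x, A2 x, A3 x),
  (y1,y2,y3) \<mapsto> (A2 y3 - A3 y2, A3 y1 - A1 y3, A1 y2 - A2 y1),
  (z1,z2,z3) \<mapsto> A1 z1 + A2 z2 + A3 z3
  (isomorphic to the exterior-algebra Koszul complex).\<close>
definition koszul_exact :: "'a::complex_inner set \<Rightarrow> ('a \<Rightarrow> 'a) \<Rightarrow> ('a \<Rightarrow> 'a) \<Rightarrow> ('a \<Rightarrow> 'a) \<Rightarrow> bool" where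
  "koszul_exact M A1 A2 A3 \<longleftrightarrow>
     inj_on (\<lambda>x. (A1 x, A2 x, A3 x)) M
   \<and> {(y1, y2, y3). y1 \<in> M \<and> y2 \<in> M \<and> y3 \<in> M \<and>
        A2 y3 - A3 y2 = 0 \<and> A3 y1 - A1 y3 = 0 \<and> A1 y2 - A2 y1 = 0}
       = (\<lambda>x. (A1 x, A2 x, A3 x)) ` M
   \<and> {(z1, z2, z3). z1 \<in> M \<and> z2 \<in> M \<and> z3 \<in> M \<and> A1 z1 + A2 z2 + A3 z3 = 0}
       = (\<lambda>(y1, y2, y3). (A2 y3 - A3 y2, A3 y1 - A1 y3, A1 y2 - A2 y1)) ` (M \<times> M \<times> M)
   \<and> (\<lambda>(z1, z2, z3). A1 z1 + A2 z2 + A3 z3) ` (M \<times> M \<times> M) = M"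

definition taylor_spectrum :: "'a::complex_inner set \<Rightarrow> ('a \<Rightarrow> 'a) \<Rightarrow> ('a \<Rightarrow> 'a) \<Rightarrow> ('a \<Rightarrow> 'a)
    \<Rightarrow> (complex \<times> complex \<times> complex) set" where
  "taylor_spectrum M T1 T2 T3 = {(l1, l2, l3).
     \<not> koszul_exact M (\<lambda>x. T1 x - scaleC l1 x) (\<lambda>x. T2 x - scaleC l2 x) (\<lambda>x. T3 x - scaleC l3 x)}"

definition Gamma3 :: "(complex \<times> complex \<times> complex) set" where
  "Gamma3 = {(z1 + z2 + z3, z1 * z2 + z2 * z3 + z3 * z1, z1 * z2 * z3) | z1 z2 z3.
              cmod z1 \<le> 1 \<and> cmod z2 \<le> 1 \<and> cmod z3 \<le> 1}"

definition bGamma3 :: "(complex \<times> complex \<times> complex) set" where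
  "bGamma3 = {(z1 + z2 + z3, z1 * z2 + z2 * z3 + z3 * z1, z1 * z2 * z3) | z1 z2 z3.
              cmod z1 = 1 \<and> cmod z2 = 1 \<and> cmod z3 = 1}"

definition poly3 :: "(nat \<times> nat \<times> nat \<Rightarrow> complex) \<Rightarrow> bool" where
  "poly3 c \<longleftrightarrow> finite {m. c m \<noteq> 0}"

definition peval :: "(nat \<times> nat \<times> nat \<Rightarrow> complex) \<Rightarrow> complex \<times> complex \<times> complex \<Rightarrow> complex" where
  "peval c z = (\<Sum>m\<in>{m. c m \<noteq> 0}. case m of (i, j, k) \<Rightarrow>
      c m * fst z ^ i * fst (snd z) ^ j * snd (snd z) ^ k)"

definition opeval :: "(nat \<times> nat \<times> nat \<Rightarrow> complex) \<Rightarrow> ('a::complex_inner \<Rightarrow> 'a) \<Rightarrow> ('a \<Rightarrow> 'a)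
    \<Rightarrow> ('a \<Rightarrow> 'a) \<Rightarrow> 'a \<Rightarrow> 'a" where
  "opeval c T1 T2 T3 x = (\<Sum>m\<in>{m. c m \<noteq> 0}. case m of (i, j, k) \<Rightarrow>
      scaleC (c m) ((T1 ^^ i) ((T2 ^^ j) ((T3 ^^ k) x))))"

text \<open>von Neumann inequality for rational functions f = p/q with q zero-free on Gamma3.\<close>
definition gamma3_vN :: "'a::complex_inner set \<Rightarrow> ('a \<Rightarrow> 'a) \<Rightarrow> ('a \<Rightarrow> 'a) \<Rightarrow> ('a \<Rightarrow> 'a) \<Rightarrow> bool" where
  "gamma3_vN M S1 S2 P \<longleftrightarrow> (\<forall>p q. poly3 p \<and> poly3 q \<and> (\<forall>z\<in>Gamma3. peval q z \<noteq> 0) \<longrightarrow>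
     (\<forall>x\<in>M. norm (opeval p S1 S2 P (inv_op_on M (opeval q S1 S2 P) x))
              \<le> (SUP z\<in>Gamma3. cmod (peval p z / peval q z)) * norm x))"

definition gamma3_contraction :: "'a::complex_inner set \<Rightarrow> ('a \<Rightarrow> 'a) \<Rightarrow> ('a \<Rightarrow> 'a) \<Rightarrow> ('a \<Rightarrow> 'a) \<Rightarrow> bool" where
  "gamma3_contraction M S1 S2 P \<longleftrightarrow>
     bounded_op_on M S1 \<and> bounded_op_on M S2 \<and> bounded_op_on M P
   \<and> commute_on M S1 S2 \<and> commute_on M S1 P \<and> commute_on M S2 P
   \<and> taylor_spectrum M S1 S2 P \<subseteq> Gamma3
   \<and> gamma3_vN M S1 S2 P"

definition gamma3_unitary :: "'a::complex_inner set \<Rightarrow> ('a \<Rightarrow> 'a) \<Rightarrow> ('a \<Rightarrow> 'a) \<Rightarrow> ('a \<Rightarrow> 'a) \<Rightarrow> bool" where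
  "gamma3_unitary M U1 U2 W \<longleftrightarrow>
     bounded_op_on M U1 \<and> bounded_op_on M U2 \<and> bounded_op_on M W
   \<and> commute_on M U1 U2 \<and> commute_on M U1 W \<and> commute_on M U2 W
   \<and> normal_on M U1 \<and> normal_on M U2 \<and> normal_on M W
   \<and> taylor_spectrum M U1 U2 W \<subseteq> bGamma3"

text \<open>Gamma3-isometry: restriction of a Gamma3-unitary (on a Hilbert space of type 'n)
  to a common invariant subspace, the subspace being identified with M via an
  isometric linear embedding J.  The space 'n is a parameter; in hypotheses it is
  universally quantified at theorem level, which renders the existential.\<close>
definition gamma3_isometry :: "'n::chilbert itself \<Rightarrow> 'a::complex_inner set
    \<Rightarrow> ('a \<Rightarrow> 'a) \<Rightarrow> ('a \<Rightarrow> 'a) \<Rightarrow> ('a \<Rightarrow> 'a) \<Rightarrow> bool" where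
  "gamma3_isometry _ M T1 T2 V \<longleftrightarrow>
     bounded_op_on M T1 \<and> bounded_op_on M T2 \<and> bounded_op_on M V
   \<and> (\<exists>(J :: 'a \<Rightarrow> 'n) U1 U2 W. gamma3_unitary UNIV U1 U2 W
        \<and> (\<forall>x\<in>M. \<forall>y\<in>M. J (x + y) = J x + J y)
        \<and> (\<forall>c. \<forall>x\<in>M. J (scaleC c x) = scaleC c (J x))
        \<and> (\<forall>x\<in>M. \<forall>y\<in>M. cinner (J x) (J y) = cinner x y)
        \<and> (\<forall>x\<in>M. U1 (J x) = J (T1 x) \<and> U2 (J x) = J (T2 x) \<and> W (J x) = J (V x)))"

definition gamma3_coisometry :: "'n::chilbert itself \<Rightarrow> 'a::complex_inner set
    \<Rightarrow> ('a \<Rightarrow> 'a) \<Rightarrow> ('a \<Rightarrow> 'a) \<Rightarrow> ('a \<Rightarrow> 'a) \<Rightarrow> bool" where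
  "gamma3_coisometry N M A1 A2 A3 \<longleftrightarrow>
     bounded_op_on M A1 \<and> bounded_op_on M A2 \<and> bounded_op_on M A3
   \<and> gamma3_isometry N M (adj_on M A1) (adj_on M A2) (adj_on M A3)"

section \<open>Dilations and extensions (K is the whole space of type 'a, H a closed subspace)\<close>

definition gamma3_isometric_dilation :: "'n::chilbert itself \<Rightarrow> 'a::complex_inner set
    \<Rightarrow> ('a \<Rightarrow> 'a) \<Rightarrow> ('a \<Rightarrow> 'a) \<Rightarrow> ('a \<Rightarrow> 'a) \<Rightarrow> ('a \<Rightarrow> 'a) \<Rightarrow> ('a \<Rightarrow> 'a) \<Rightarrow> ('a \<Rightarrow> 'a) \<Rightarrow> bool" where
  "gamma3_isometric_dilation N H S1 S2 P T1 T2 V \<longleftrightarrow>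
     gamma3_isometry N UNIV T1 T2 V
   \<and> (\<forall>m1 m2 n. \<forall>h\<in>H. proj_on H ((T1 ^^ m1) ((T2 ^^ m2) ((V ^^ n) h)))
                         = (S1 ^^ m1) ((S2 ^^ m2) ((P ^^ n) h)))"

definition minimal_dilation :: "'a::complex_inner set \<Rightarrow> ('a \<Rightarrow> 'a) \<Rightarrow> ('a \<Rightarrow> 'a) \<Rightarrow> ('a \<Rightarrow> 'a) \<Rightarrow> bool" where
  "minimal_dilation H T1 T2 V \<longleftrightarrow>
     closure (cspan {(T1 ^^ m1) ((T2 ^^ m2) ((V ^^ n) h)) | m1 m2 n h. h \<in> H}) = UNIV"

definition gamma3_coisometric_extension :: "'n::chilbert itself \<Rightarrow> 'a::complex_inner set
    \<Rightarrow> ('a \<Rightarrow> 'a) \<Rightarrow> ('a \<Rightarrow> 'a) \<Rightarrow> ('a \<Rightarrow> 'a) \<Rightarrow> ('a \<Rightarrow> 'a) \<Rightarrow> ('a \<Rightarrow> 'a) \<Rightarrow> ('a \<Rightarrow> 'a) \<Rightarrow> bool" where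
  "gamma3_coisometric_extension N H R1 R2 R3 A1 A2 A3 \<longleftrightarrow>
     gamma3_coisometry N UNIV A1 A2 A3
   \<and> (\<forall>h\<in>H. A1 h \<in> H \<and> A2 h \<in> H \<and> A3 h \<in> H)
   \<and> (\<forall>h\<in>H. A1 h = R1 h \<and> A2 h = R2 h \<and> A3 h = R3 h)"

end

theory Submission
  imports Defs
begin

lemma scaleC_zero_left[simp]: "scaleC 0 (x::'a::complex_inner) = 0"
proof -
  have "scaleC 0 x = scaleC 0 x + scaleC 0 x" using scaleC_add_left[of 0 0 x] by simp
  thus ?thesis by simp
qed

lemma scaleC_zero_right[simp]: "scaleC a (0::'a::complex_inner) = 0"
proof -
  have "scaleC a (0::'a) = scaleC a 0 + scaleC a 0" using scaleC_add_right[of a 0 0] by simp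
  thus ?thesis by simp
qed

lemma scaleC_minus_one: "scaleC (-1) (x::'a::complex_inner) = - x"
proof -
  have "scaleC 1 x + scaleC (-1) x = 0" using scaleC_add_left[of 1 "-1" x] by simp
  thus ?thesis by (simp add: scaleC_one eq_neg_iff_add_eq_0 add.commute)
qed

lemma scaleC_minus_right: "scaleC a (- (x::'a::complex_inner)) = - scaleC a x"
  by (metis scaleC_minus_one scaleC_scaleC mult.commute)

lemma scaleC_diff_right: "scaleC a ((x::'a::complex_inner) - y) = scaleC a x - scaleC a y"
  by (metis diff_conv_add_uminus scaleC_add_right scaleC_minus_right)

lemma cinner_add_left: "cinner ((x::'a::complex_inner) + y) z = cinner x z + cinner y z"
  by (metis cinner_conj cinner_add_right complex_cnj_add)

lemma cinner_scaleC_left: "cinner (scaleC a (x::'a::complex_inner)) y = cnj a * cinner x y"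
  by (metis cinner_conj cinner_scaleC_right complex_cnj_mult)

lemma cinner_zero_right[simp]: "cinner (x::'a::complex_inner) 0 = 0"
  using cinner_scaleC_right[of x 0 0] by simp

lemma cinner_zero_left[simp]: "cinner 0 (x::'a::complex_inner) = 0"
  using cinner_scaleC_left[of 0 0 x] by simp

lemma cinner_minus_right: "cinner (x::'a::complex_inner) (- y) = - cinner x y"
  by (metis cinner_scaleC_right scaleC_minus_one mult_minus1)

lemma cinner_minus_left: "cinner (- (x::'a::complex_inner)) y = - cinner x y"
  by (metis cinner_scaleC_left scaleC_minus_one mult_minus1 complex_cnj_minus complex_cnj_one)

lemma cinner_diff_right: "cinner (x::'a::complex_inner) (y - z) = cinner x y - cinner x z"
  by (metis diff_conv_add_uminus cinner_add_right cinner_minus_right)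

lemma cinner_diff_left: "cinner ((x::'a::complex_inner) - y) z = cinner x z - cinner y z"
  by (metis diff_conv_add_uminus cinner_add_left cinner_minus_left)

lemma cinner_sum_left: "finite F \<Longrightarrow> cinner (\<Sum>v\<in>F. f v) (y::'a::complex_inner) = (\<Sum>v\<in>F. cinner (f v) y)"
  by (induction F rule: finite_induct) (auto simp: cinner_add_left)

lemma cinner_self_zero: "cinner (x::'a::complex_inner) x = 0 \<longleftrightarrow> x = 0"
  by (simp add: cinner_self_norm)

lemma re_cinner_self: "Re (cinner (x::'a::complex_inner) x) = (norm x)\<^sup>2"
  by (simp add: cinner_self_norm)

lemma norm_add_sq: "(norm ((x::'a::complex_inner) + y))\<^sup>2 = (norm x)\<^sup>2 + (norm y)\<^sup>2 + 2 * Re (cinner x y)"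
proof -
  have "cinner (x+y) (x+y) = cinner x x + cinner y y + (cinner x y + cnj (cinner x y))"
    by (simp add: cinner_add_left cinner_add_right cinner_conj[of y x])
  hence "Re (cinner (x+y) (x+y)) = Re (cinner x x) + Re (cinner y y) + 2 * Re (cinner x y)" by simp
  thus ?thesis by (simp add: re_cinner_self)
qed

lemma norm_scaleC: "norm (scaleC c (x::'a::complex_inner)) = cmod c * norm x"
proof -
  have cc: "cnj c * c = complex_of_real ((cmod c)\<^sup>2)" by (subst complex_norm_square) (simp add: mult.commute)
  have "cinner (scaleC c x) (scaleC c x) = (cnj c * c) * cinner x x"
    by (simp add: cinner_scaleC_left cinner_scaleC_right)
  also have "\<dots> = complex_of_real ((cmod c * norm x)\<^sup>2)"
    by (simp only: cc cinner_self_norm of_real_mult[symmetric] power_mult_distrib)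
  finally have "(norm (scaleC c x))\<^sup>2 = (cmod c * norm x)\<^sup>2"
    using re_cinner_self[of "scaleC c x"] by simp
  thus ?thesis by (rule power2_eq_imp_eq) simp_all
qed

lemma key_sq:
  assumes "(x::'a::complex_inner) \<noteq> 0"
  shows "(norm (y - scaleC (cinner x y / complex_of_real ((norm x)\<^sup>2)) x))\<^sup>2
       = (norm y)\<^sup>2 - (cmod (cinner x y))\<^sup>2 / (norm x)\<^sup>2"
proof -
  define c where "c = cinner x y / complex_of_real ((norm x)\<^sup>2)"
  have nx: "(norm x)\<^sup>2 > 0" using assms by simp
  have "(norm (y - scaleC c x))\<^sup>2 = (norm (y + - scaleC c x))\<^sup>2" by simp
  also have "\<dots> = (norm y)\<^sup>2 + (cmod c * norm x)\<^sup>2 + 2 * Re (cinner y (- scaleC c x))"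
    by (simp only: norm_add_sq norm_minus_cancel norm_scaleC)
  also have "Re (cinner y (- scaleC c x)) = - Re (c * cinner y x)"
    by (simp add: cinner_minus_right cinner_scaleC_right)
  also have "c * cinner y x = complex_of_real ((cmod (cinner x y))\<^sup>2 / (norm x)\<^sup>2)"
  proof -
    have "c * cinner y x = cinner x y * cnj (cinner x y) / complex_of_real ((norm x)\<^sup>2)"
      unfolding c_def by (simp add: cinner_conj[of y x])
    also have "cinner x y * cnj (cinner x y) = complex_of_real ((cmod (cinner x y))\<^sup>2)"
      by (rule complex_norm_square[symmetric])
    finally show ?thesis by simp
  qed
  also have "(cmod c * norm x)\<^sup>2 = (cmod (cinner x y))\<^sup>2 / (norm x)\<^sup>2"
  proof -
    have "cmod c = cmod (cinner x y) / (norm x)\<^sup>2"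
      unfolding c_def by (simp add: norm_divide norm_power)
    thus ?thesis using nx by (simp add: power_divide field_simps power2_eq_square)
  qed
  finally show ?thesis unfolding c_def by (simp add: algebra_simps)
qed

lemma cauchy_schwarz: "cmod (cinner (x::'a::complex_inner) y) \<le> norm x * norm y"
proof (cases "x = 0")
  case True thus ?thesis by simp
next
  case False
  hence nx: "(norm x)\<^sup>2 > 0" by simp
  from key_sq[OF False, of y] have "0 \<le> (norm y)\<^sup>2 - (cmod (cinner x y))\<^sup>2 / (norm x)\<^sup>2"
    by (metis zero_le_power2)
  hence "(cmod (cinner x y))\<^sup>2 \<le> (norm x * norm y)\<^sup>2" using nx
    by (simp add: field_simps power_mult_distrib)
  thus ?thesis by (rule power2_le_imp_le) simp
qed

lemma csub_diff: "csubspace M \<Longrightarrow> x \<in> M \<Longrightarrow> y \<in> M \<Longrightarrow> x - y \<in> M"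
  unfolding csubspace_def by (metis diff_conv_add_uminus scaleC_minus_one)

lemma csub_add: "csubspace M \<Longrightarrow> x \<in> M \<Longrightarrow> y \<in> M \<Longrightarrow> x + y \<in> M"
  unfolding csubspace_def by blast

lemma csub_scaleC: "csubspace M \<Longrightarrow> x \<in> M \<Longrightarrow> scaleC c x \<in> M"
  unfolding csubspace_def by blast

lemma csub_scaleR: "csubspace M \<Longrightarrow> x \<in> M \<Longrightarrow> scaleR r x \<in> M"
  unfolding csubspace_def by (simp add: scaleR_scaleC)

lemma csub_zero: "csubspace M \<Longrightarrow> 0 \<in> M"
  unfolding csubspace_def by blast

lemma parallelogram:
  "(norm ((a::'a::complex_inner) + b))\<^sup>2 + (norm (a - b))\<^sup>2 = 2 * (norm a)\<^sup>2 + 2 * (norm b)\<^sup>2"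
proof -
  have "(norm (a - b))\<^sup>2 = (norm (a + - b))\<^sup>2" by simp
  also have "\<dots> = (norm a)\<^sup>2 + (norm b)\<^sup>2 + 2 * Re (cinner a (- b))"
    by (simp only: norm_add_sq norm_minus_cancel)
  finally show ?thesis by (simp add: norm_add_sq cinner_minus_right)
qed

lemma proj_exists:
  assumes "closed_csubspace (K::'a::chilbert set)"
  shows "\<exists>y\<in>K. \<forall>z\<in>K. cinner z (x - y) = 0"
proof -
  have sub: "csubspace K" and cl: "closed K" using assms unfolding closed_csubspace_def by auto
  define D where "D = {norm (x - m) | m. m \<in> K}"
  define d where "d = Inf D"
  have "0 \<in> K" using csub_zero[OF sub] .
  hence Dne: "D \<noteq> {}" unfolding D_def by blast
  have bdd: "bdd_below D" unfolding D_def by (rule bdd_belowI[of _ 0]) auto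
  have dle: "\<And>m. m \<in> K \<Longrightarrow> d \<le> norm (x - m)"
    using bdd unfolding d_def D_def by (auto intro!: cInf_lower)
  have d0: "0 \<le> d" unfolding d_def using Dne by (rule cInf_greatest) (auto simp: D_def)
  have "\<forall>n. \<exists>m. m \<in> K \<and> (norm (x - m))\<^sup>2 < d\<^sup>2 + 1 / real (Suc n)"
  proof
    fix n
    have "sqrt (d\<^sup>2) < sqrt (d\<^sup>2 + 1 / real (Suc n))" by (rule real_sqrt_less_mono) simp
    hence "d < sqrt (d\<^sup>2 + 1 / real (Suc n))" using d0 by simp
    hence "\<exists>t\<in>D. t < sqrt (d\<^sup>2 + 1 / real (Suc n))" unfolding d_def using Dne bdd
      by (simp add: cInf_less_iff)
    then obtain m where m: "m \<in> K" "norm (x - m) < sqrt (d\<^sup>2 + 1 / real (Suc n))"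
      unfolding D_def by blast
    have "(norm (x - m))\<^sup>2 < (sqrt (d\<^sup>2 + 1 / real (Suc n)))\<^sup>2"
      using m(2) by (intro power_strict_mono) auto
    also have "\<dots> = d\<^sup>2 + 1 / real (Suc n)" by simp
    finally show "\<exists>m. m \<in> K \<and> (norm (x - m))\<^sup>2 < d\<^sup>2 + 1 / real (Suc n)" using m(1) by blast
  qed
  then obtain m where mK: "\<And>n. m n \<in> K" and mb: "\<And>n. (norm (x - m n))\<^sup>2 < d\<^sup>2 + 1 / real (Suc n)"
    by metis
  have bound: "(norm (m n - m k))\<^sup>2 \<le> 2 / real (Suc n) + 2 / real (Suc k)" for n k
  proof -
    define a where "a = x - m k"
    define b where "b = x - m n"
    have ab: "a - b = m n - m k" unfolding a_def b_def by simp
    have mid: "scaleR (1/2) (m n + m k) \<in> K" by (intro csub_scaleR csub_add sub mK)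
    have "a + b = scaleR 2 (x - scaleR (1/2) (m n + m k))"
      unfolding a_def b_def by (simp add: algebra_simps scaleR_2)
    hence "norm (a + b) = 2 * norm (x - scaleR (1/2) (m n + m k))" by simp
    hence "2 * d \<le> norm (a + b)" using dle[OF mid] by simp
    hence "(2 * d)\<^sup>2 \<le> (norm (a + b))\<^sup>2" using d0 by (intro power_mono) auto
    moreover have "(norm (a + b))\<^sup>2 + (norm (a - b))\<^sup>2 = 2 * (norm a)\<^sup>2 + 2 * (norm b)\<^sup>2"
      by (rule parallelogram)
    moreover have "(norm a)\<^sup>2 < d\<^sup>2 + 1 / real (Suc k)" "(norm b)\<^sup>2 < d\<^sup>2 + 1 / real (Suc n)"
      unfolding a_def b_def using mb by auto
    ultimately show ?thesis unfolding ab by (simp add: power_mult_distrib)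
  qed
  have "Cauchy m"
  proof (rule CauchyI)
    fix e :: real assume e: "0 < e"
    obtain N where N: "inverse (real (Suc N)) < e\<^sup>2 / 4"
      using reals_Archimedean[of "e\<^sup>2/4"] e by auto
    show "\<exists>M. \<forall>p\<ge>M. \<forall>q\<ge>M. norm (m p - m q) < e"
    proof (intro exI allI impI)
      fix p q assume p: "N \<le> p" and q: "N \<le> q"
      have "2 / real (Suc p) \<le> 2 / real (Suc N)" using p by (simp add: frac_le)
      moreover have "2 / real (Suc q) \<le> 2 / real (Suc N)" using q by (simp add: frac_le)
      moreover have "4 / real (Suc N) < e\<^sup>2" using N by (simp add: field_simps)
      ultimately have "(norm (m p - m q))\<^sup>2 < e\<^sup>2" using bound[of p q] by linarith
      thus "norm (m p - m q) < e" using e by (simp add: power_less_imp_less_base)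
    qed
  qed
  then obtain y where lim: "m \<longlonglongrightarrow> y" using Cauchy_convergent_iff convergent_def by blast
  have yK: "y \<in> K" using closed_sequentially[OF cl] mK lim by blast
  have l1: "(\<lambda>n. (norm (x - m n))\<^sup>2) \<longlonglongrightarrow> (norm (x - y))\<^sup>2" by (intro tendsto_intros lim)
  have l2: "(\<lambda>n. d\<^sup>2 + 1 / real (Suc n)) \<longlonglongrightarrow> d\<^sup>2 + 0"
    by (intro tendsto_intros) (use LIMSEQ_inverse_real_of_nat in \<open>simp add: inverse_eq_divide\<close>)
  have "(norm (x - y))\<^sup>2 \<le> d\<^sup>2 + 0"
    by (rule LIMSEQ_le[OF l1 l2], rule exI[of _ 0], intro allI impI less_imp_le mb)
  hence "(norm (x - y))\<^sup>2 \<le> d\<^sup>2" by simp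
  hence "norm (x - y) \<le> d" using d0 by (rule power2_le_imp_le)
  hence best: "\<And>z. z \<in> K \<Longrightarrow> norm (x - y) \<le> norm (x - z)" using dle by force
  have "\<forall>z\<in>K. cinner z (x - y) = 0"
  proof
    fix z assume zK: "z \<in> K"
    show "cinner z (x - y) = 0"
    proof (cases "z = 0")
      case True thus ?thesis by simp
    next
      case False
      define c where "c = cinner z (x - y) / complex_of_real ((norm z)\<^sup>2)"
      have "y + scaleC c z \<in> K" by (intro csub_add csub_scaleC sub yK zK)
      hence "norm (x - y) \<le> norm (x - (y + scaleC c z))" by (rule best)
      also have "x - (y + scaleC c z) = (x - y) - scaleC c z" by simp
      finally have "(norm (x - y))\<^sup>2 \<le> (norm ((x - y) - scaleC c z))\<^sup>2" by (simp add: power_mono)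
      also have "\<dots> = (norm (x - y))\<^sup>2 - (cmod (cinner z (x - y)))\<^sup>2 / (norm z)\<^sup>2"
        unfolding c_def by (rule key_sq[OF False])
      finally have "(cmod (cinner z (x - y)))\<^sup>2 / (norm z)\<^sup>2 \<le> 0" by simp
      moreover have "(norm z)\<^sup>2 > 0" using False by simp
      ultimately have "(cmod (cinner z (x - y)))\<^sup>2 \<le> 0" by (simp add: divide_le_0_iff)
      thus ?thesis by simp
    qed
  qed
  thus ?thesis using yK by blast
qed

lemma proj_unique:
  assumes "csubspace K" "y1 \<in> K" "y2 \<in> K"
    "\<forall>z\<in>K. cinner z (x - y1) = 0" "\<forall>z\<in>K. cinner z (x - y2) = 0"
  shows "y1 = y2"
proof -
  have d: "y2 - y1 \<in> K" using csub_diff assms by blast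
  have "cinner (y2 - y1) (x - y1) - cinner (y2 - y1) (x - y2) = 0" using assms d by simp
  hence "cinner (y2 - y1) (y2 - y1) = 0" by (simp add: cinner_diff_right)
  thus ?thesis by (simp add: cinner_self_zero)
qed

lemma proj_on_eq:
  assumes "csubspace K" "y \<in> K" "\<forall>z\<in>K. cinner z (x - y) = 0"
  shows "proj_on K x = y"
  unfolding proj_on_def
  by (rule the_equality) (use assms proj_unique[OF assms(1)] in blast)+

lemma proj_on_prop:
  assumes "closed_csubspace (K::'a::chilbert set)"
  shows "proj_on K x \<in> K \<and> (\<forall>z\<in>K. cinner z (x - proj_on K x) = 0)"
proof -
  have sub: "csubspace K" using assms unfolding closed_csubspace_def by auto
  obtain y where y: "y \<in> K" "\<forall>z\<in>K. cinner z (x - y) = 0" using proj_exists[OF assms] by blast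
  have "proj_on K x = y" by (rule proj_on_eq[OF sub y])
  thus ?thesis using y by simp
qed

lemma riesz:
  fixes f :: "'a::chilbert \<Rightarrow> complex"
  assumes M: "closed_csubspace M"
    and add: "\<forall>x\<in>M. \<forall>y\<in>M. f (x + y) = f x + f y"
    and scal: "\<forall>c. \<forall>x\<in>M. f (scaleC c x) = c * f x"
    and bnd: "\<forall>x\<in>M. cmod (f x) \<le> C * norm x"
  shows "\<exists>z\<in>M. \<forall>x\<in>M. f x = cinner z x"
proof -
  have sub: "csubspace M" and cl: "closed M" using M unfolding closed_csubspace_def by auto
  have M0: "0 \<in> M" using csub_zero[OF sub] .
  have f0: "f 0 = 0" using scal M0 by (metis mult_zero_left scaleC_zero_left)
  have fdiff: "f (x - y) = f x - f y" if "x \<in> M" "y \<in> M" for x y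
  proof -
    have "f x = f ((x - y) + y)" by simp
    also have "\<dots> = f (x - y) + f y" using add csub_diff[OF sub that] that by blast
    finally show ?thesis by simp
  qed
  show ?thesis
  proof (cases "\<forall>x\<in>M. f x = 0")
    case True thus ?thesis using M0 by (intro bexI[of _ 0]) auto
  next
    case False
    then obtain u where uM: "u \<in> M" and fu: "f u \<noteq> 0" by blast
    define K where "K = {x\<in>M. f x = 0}"
    have subK: "csubspace K" unfolding csubspace_def K_def
      using M0 f0 add scal csub_add[OF sub] csub_scaleC[OF sub] by auto
    have "closed K" unfolding closed_sequential_limits
    proof (intro allI impI, elim conjE)
      fix s l assume sK: "\<forall>n. s n \<in> K" and lim: "s \<longlonglongrightarrow> l"
      have lM: "l \<in> M" using closed_sequentially[OF cl] sK lim unfolding K_def by blast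
      have le: "cmod (f l) \<le> C * norm (l - s n)" for n
      proof -
        have "f l = f (l - s n)" using fdiff[OF lM, of "s n"] sK unfolding K_def by auto
        thus ?thesis using bnd csub_diff[OF sub lM, of "s n"] sK unfolding K_def by auto
      qed
      have "(\<lambda>n. C * norm (l - s n)) \<longlonglongrightarrow> C * norm (l - l)" by (intro tendsto_intros lim)
      hence "cmod (f l) \<le> C * norm (l - l)" by (rule LIMSEQ_le_const) (use le in blast)
      thus "l \<in> K" using lM unfolding K_def by simp
    qed
    hence clK: "closed_csubspace K" using subK unfolding closed_csubspace_def by simp
    obtain p where pK: "p \<in> K" and orth: "\<forall>z\<in>K. cinner z (u - p) = 0"
      using proj_exists[OF clK, of u] by blast
    define w where "w = u - p"
    have pM: "p \<in> M" and fp: "f p = 0" using pK unfolding K_def by auto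
    have wM: "w \<in> M" unfolding w_def using csub_diff[OF sub uM pM] .
    have fw: "f w = f u" unfolding w_def using fdiff[OF uM pM] fp by simp
    hence fw0: "f w \<noteq> 0" using fu by simp
    hence w0: "w \<noteq> 0" using f0 by auto
    hence nw: "(norm w)\<^sup>2 \<noteq> 0" by simp
    define z where "z = scaleC (cnj (f w) / complex_of_real ((norm w)\<^sup>2)) w"
    have "z \<in> M" unfolding z_def using csub_scaleC[OF sub wM] .
    moreover have "f x = cinner z x" if xM: "x \<in> M" for x
    proof -
      define k where "k = x - scaleC (f x / f w) w"
      have "scaleC (f x / f w) w \<in> M" using csub_scaleC[OF sub wM] .
      hence kM: "k \<in> M" unfolding k_def using csub_diff[OF sub xM] by blast
      have "f k = f x - (f x / f w) * f w"
        unfolding k_def using fdiff[OF xM \<open>scaleC (f x / f w) w \<in> M\<close>] scal wM by simp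
      hence "f k = 0" using fw0 by simp
      hence "k \<in> K" using kM unfolding K_def by simp
      hence "cinner k w = 0" using orth unfolding w_def by blast
      hence "cinner x w = cnj (f x / f w) * cinner w w"
        unfolding k_def by (simp add: cinner_diff_left cinner_scaleC_left)
      hence "cinner w x = (f x / f w) * complex_of_real ((norm w)\<^sup>2)"
        by (metis cinner_conj cinner_self_norm complex_cnj_cnj complex_cnj_complex_of_real complex_cnj_mult)
      hence "cinner z x = f w / complex_of_real ((norm w)\<^sup>2) * ((f x / f w) * complex_of_real ((norm w)\<^sup>2))"
        unfolding z_def by (simp add: cinner_scaleC_left)
      also have "\<dots> = f x" using fw0 nw by (simp add: field_simps)
      finally show ?thesis by simp
    qed
    ultimately show ?thesis by blast
  qed
qed

lemma adj_exists:
  assumes M: "closed_csubspace (M::'a::chilbert set)" and T: "bounded_op_on M T" and yM: "y \<in> M"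
  shows "\<exists>z\<in>M. \<forall>x\<in>M. cinner (T x) y = cinner x z"
proof -
  obtain C where C: "\<forall>x\<in>M. norm (T x) \<le> C * norm x" using T unfolding bounded_op_on_def by blast
  have tadd: "\<forall>x\<in>M. \<forall>y\<in>M. T (x + y) = T x + T y" and tsc: "\<forall>c. \<forall>x\<in>M. T (scaleC c x) = scaleC c (T x)"
    using T unfolding bounded_op_on_def by auto
  have "\<exists>z\<in>M. \<forall>x\<in>M. cinner y (T x) = cinner z x"
  proof (rule riesz[OF M, where C = "norm y * C"])
    show "\<forall>x\<in>M. \<forall>x'\<in>M. cinner y (T (x + x')) = cinner y (T x) + cinner y (T x')"
      using tadd by (simp add: cinner_add_right)
    show "\<forall>c. \<forall>x\<in>M. cinner y (T (scaleC c x)) = c * cinner y (T x)"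
      using tsc by (simp add: cinner_scaleC_right)
    show "\<forall>x\<in>M. cmod (cinner y (T x)) \<le> norm y * C * norm x"
    proof
      fix x assume "x \<in> M"
      have "cmod (cinner y (T x)) \<le> norm y * norm (T x)" by (rule cauchy_schwarz)
      also have "\<dots> \<le> norm y * (C * norm x)" using C \<open>x \<in> M\<close> by (simp add: mult_left_mono)
      finally show "cmod (cinner y (T x)) \<le> norm y * C * norm x" by (simp add: mult.assoc)
    qed
  qed
  then obtain z where "z \<in> M" "\<forall>x\<in>M. cinner y (T x) = cinner z x" by blast
  thus ?thesis by (metis cinner_conj)
qed

lemma adj_unique:
  assumes "csubspace M" "z1 \<in> M" "z2 \<in> M" "\<forall>x\<in>M. cinner x z1 = cinner x z2"
  shows "z1 = z2"
proof -
  have "z1 - z2 \<in> M" using csub_diff assms by blast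
  hence "cinner (z1 - z2) (z1 - z2) = 0" using assms(4) by (simp add: cinner_diff_right)
  thus ?thesis by (simp add: cinner_self_zero)
qed

lemma adj_on_eq:
  assumes "csubspace M" "z \<in> M" "\<forall>x\<in>M. cinner (T x) y = cinner x z"
  shows "adj_on M T y = z"
  unfolding adj_on_def
  by (rule the_equality) (use assms adj_unique[OF assms(1)] in \<open>metis\<close>)+

lemma adj_on_prop:
  assumes M: "closed_csubspace (M::'a::chilbert set)" and T: "bounded_op_on M T" and yM: "y \<in> M"
  shows "adj_on M T y \<in> M \<and> (\<forall>x\<in>M. cinner (T x) y = cinner x (adj_on M T y))"
proof -
  have sub: "csubspace M" using M unfolding closed_csubspace_def by auto
  obtain z where z: "z \<in> M" "\<forall>x\<in>M. cinner (T x) y = cinner x z" using adj_exists[OF M T yM] by blast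
  have "adj_on M T y = z" by (rule adj_on_eq[OF sub z])
  thus ?thesis using z by simp
qed

lemma closed_csubspace_UNIV: "closed_csubspace (UNIV::'a::complex_inner set)"
  unfolding closed_csubspace_def csubspace_def by simp

lemma csubspace_UNIV: "csubspace (UNIV::'a::complex_inner set)"
  unfolding csubspace_def by simp

lemma adj_univ:
  assumes "bounded_op_on UNIV (T::'a::chilbert \<Rightarrow> 'a)"
  shows "cinner (T x) y = cinner x (adj_on UNIV T y)"
  using adj_on_prop[OF closed_csubspace_UNIV assms, of y] by simp

lemma adj_bounded:
  assumes T: "bounded_op_on UNIV (T::'a::chilbert \<Rightarrow> 'a)"
  shows "bounded_op_on UNIV (adj_on UNIV T)"
proof -
  define A where "A = adj_on UNIV T"
  have pr: "\<And>x y. cinner (T x) y = cinner x (A y)" unfolding A_def using adj_univ[OF T] by blast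
  have add: "A (x + y) = A x + A y" for x y
    unfolding A_def by (rule adj_on_eq[OF csubspace_UNIV]) (auto simp: pr[unfolded A_def] cinner_add_right)
  have sc: "A (scaleC c x) = scaleC c (A x)" for c x
    unfolding A_def by (rule adj_on_eq[OF csubspace_UNIV]) (auto simp: pr[unfolded A_def] cinner_scaleC_right)
  obtain C where C: "\<forall>x. norm (T x) \<le> C * norm x" using T unfolding bounded_op_on_def by auto
  define C' where "C' = max C 0"
  have C': "norm (T x) \<le> C' * norm x" "0 \<le> C'" for x
    unfolding C'_def by (rule order.trans[OF C[rule_format]], simp add: mult_right_mono, simp)
  have "norm (A y) \<le> C' * norm y" for y
  proof (cases "A y = 0")
    case True thus ?thesis using C' by simp
  next
    case False
    have "(norm (A y))\<^sup>2 = Re (cinner (A y) (A y))" by (simp add: re_cinner_self)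
    also have "\<dots> = Re (cinner (T (A y)) y)" by (simp add: pr)
    also have "\<dots> \<le> cmod (cinner (T (A y)) y)" by (rule complex_Re_le_cmod)
    also have "\<dots> \<le> norm (T (A y)) * norm y" by (rule cauchy_schwarz)
    also have "\<dots> \<le> C' * norm (A y) * norm y" using C' by (simp add: mult_right_mono)
    finally have "norm (A y) * norm (A y) \<le> (C' * norm y) * norm (A y)"
      by (simp add: power2_eq_square algebra_simps)
    thus ?thesis using False by simp
  qed
  thus ?thesis unfolding bounded_op_on_def A_def[symmetric] using add sc by blast
qed

lemma adj_adj:
  assumes T: "bounded_op_on UNIV (T::'a::chilbert \<Rightarrow> 'a)"
  shows "adj_on UNIV (adj_on UNIV T) = T"
proof
  fix y
  show "adj_on UNIV (adj_on UNIV T) y = T y"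
  proof (rule adj_on_eq[OF csubspace_UNIV], simp, intro ballI)
    fix x
    have "cinner (adj_on UNIV T x) y = cnj (cinner y (adj_on UNIV T x))" by (rule cinner_conj)
    also have "\<dots> = cnj (cinner (T y) x)" by (simp add: adj_univ[OF T])
    also have "\<dots> = cinner x (T y)" by (simp add: cinner_conj[of x])
    finally show "cinner (adj_on UNIV T x) y = cinner x (T y)" .
  qed
qed

lemma iso_commute:
  fixes N :: "'n::chilbert itself"
  assumes "gamma3_isometry N (UNIV::'a::complex_inner set) T1 T2 V"
  shows "commute_on UNIV T1 T2 \<and> commute_on UNIV T1 V \<and> commute_on UNIV T2 V"
proof -
  obtain J :: "'a \<Rightarrow> 'n" and U1 U2 W where
    u: "gamma3_unitary UNIV U1 U2 W" and
    Jadd: "\<forall>x y. J (x + y) = J x + J y" and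
    Jin: "\<forall>x y. cinner (J x) (J y) = cinner x y" and
    Jint: "\<forall>x. U1 (J x) = J (T1 x) \<and> U2 (J x) = J (T2 x) \<and> W (J x) = J (V x)"
    using assms unfolding gamma3_isometry_def by auto
  have c: "\<forall>x. U1 (U2 x) = U2 (U1 x)" "\<forall>x. U1 (W x) = W (U1 x)" "\<forall>x. U2 (W x) = W (U2 x)"
    using u unfolding gamma3_unitary_def commute_on_def by auto
  have Jdiff: "J (x - y) = J x - J y" for x y
    using Jadd[rule_format, of "x - y" y] by (simp add: algebra_simps)
  have inj: "x = y" if "J x = J y" for x y
  proof -
    have "cinner (x - y) (x - y) = cinner (J (x - y)) (J (x - y))" using Jin by simp
    also have "\<dots> = 0" using that Jdiff by simp
    finally show ?thesis by (simp add: cinner_self_zero)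
  qed
  have e1: "J (T1 (T2 x)) = J (T2 (T1 x))" for x
  proof -
    have "J (T1 (T2 x)) = U1 (U2 (J x))" using Jint by simp
    also have "\<dots> = U2 (U1 (J x))" using c by simp
    also have "\<dots> = J (T2 (T1 x))" using Jint by simp
    finally show ?thesis .
  qed
  have e2: "J (T1 (V x)) = J (V (T1 x))" for x
  proof -
    have "J (T1 (V x)) = U1 (W (J x))" using Jint by simp
    also have "\<dots> = W (U1 (J x))" using c by simp
    also have "\<dots> = J (V (T1 x))" using Jint by simp
    finally show ?thesis .
  qed
  have e3: "J (T2 (V x)) = J (V (T2 x))" for x
  proof -
    have "J (T2 (V x)) = U2 (W (J x))" using Jint by simp
    also have "\<dots> = W (U2 (J x))" using c by simp
    also have "\<dots> = J (V (T2 x))" using Jint by simp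
    finally show ?thesis .
  qed
  show ?thesis unfolding commute_on_def using inj e1 e2 e3 by blast
qed

lemma funpow_commute_univ:
  assumes "commute_on UNIV A B" shows "A ((B ^^ n) x) = (B ^^ n) (A x)"
  using assms unfolding commute_on_def by (induction n) auto

lemma funpow_in:
  assumes "\<forall>x\<in>H. S x \<in> H" "x \<in> H" shows "(S ^^ n) x \<in> H"
  using assms by (induction n) auto

lemma funpow_commute_on:
  assumes "commute_on H A B" "\<forall>x\<in>H. B x \<in> H" "x \<in> H"
  shows "A ((B ^^ n) x) = (B ^^ n) (A x)"
  using assms
proof (induction n)
  case 0 thus ?case by simp
next
  case (Suc n)
  have "(B ^^ n) x \<in> H" using funpow_in[OF Suc.prems(2,3)] .
  thus ?case using Suc unfolding commute_on_def by simp
qed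

lemma step:
  assumes H: "closed_csubspace (H::'a::chilbert set)"
    and Tb: "bounded_op_on UNIV T" and Sb: "bounded_op_on H S"
    and ext: "\<forall>h\<in>H. adj_on UNIV T h \<in> H \<and> adj_on UNIV T h = adj_on H S h"
    and X'H: "X' \<in> H" and Q: "\<forall>k\<in>H. cinner X k = cinner X' k"
  shows "\<forall>k\<in>H. cinner (T X) k = cinner (S X') k"
proof
  fix k assume kH: "k \<in> H"
  have "cinner (T X) k = cinner X (adj_on UNIV T k)" by (rule adj_univ[OF Tb])
  also have "\<dots> = cinner X' (adj_on H S k)" using Q ext kH by metis
  also have "\<dots> = cinner (S X') k" using adj_on_prop[OF H Sb kH] X'H by simp
  finally show "cinner (T X) k = cinner (S X') k" .
qed

lemma iter:
  assumes H: "closed_csubspace (H::'a::chilbert set)"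
    and Tb: "bounded_op_on UNIV T" and Sb: "bounded_op_on H S"
    and ext: "\<forall>h\<in>H. adj_on UNIV T h \<in> H \<and> adj_on UNIV T h = adj_on H S h"
    and X'H: "X' \<in> H" and Q: "\<forall>k\<in>H. cinner X k = cinner X' k"
  shows "(S ^^ n) X' \<in> H \<and> (\<forall>k\<in>H. cinner ((T ^^ n) X) k = cinner ((S ^^ n) X') k)"
proof (induction n)
  case 0 thus ?case using X'H Q by simp
next
  case (Suc n)
  have SH: "\<forall>x\<in>H. S x \<in> H" using Sb unfolding bounded_op_on_def by auto
  show ?case using step[OF H Tb Sb ext, of "(S ^^ n) X'" "(T ^^ n) X"] Suc SH by simp
qed

lemma ext_from_gen:
  assumes H: "closed_csubspace (H::'a::chilbert set)"
    and Tb: "bounded_op_on UNIV T" and Sb: "bounded_op_on H S"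
    and dense: "closure (cspan G) = UNIV"
    and gen: "\<forall>X\<in>G. \<exists>X'\<in>H. (\<forall>k\<in>H. cinner X k = cinner X' k) \<and> (\<forall>k\<in>H. cinner (T X) k = cinner (S X') k)"
    and hH: "h \<in> H"
  shows "adj_on UNIV T h \<in> H \<and> adj_on UNIV T h = adj_on H S h"
proof -
  define s where "s = adj_on H S h"
  define a where "a = adj_on UNIV T h"
  have sH: "s \<in> H" and sp: "\<forall>x\<in>H. cinner (S x) h = cinner x s"
    using adj_on_prop[OF H Sb hH] unfolding s_def by auto
  define D where "D = a - s"
  define Z where "Z = {x. cinner x D = 0}"
  have GZ: "G \<subseteq> Z"
  proof
    fix X assume "X \<in> G"
    then obtain X' where X'H: "X' \<in> H" and q1: "\<forall>k\<in>H. cinner X k = cinner X' k"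
      and q2: "\<forall>k\<in>H. cinner (T X) k = cinner (S X') k" using gen by blast
    have "cinner X a = cinner (T X) h" unfolding a_def by (rule adj_univ[OF Tb, symmetric])
    also have "\<dots> = cinner (S X') h" using q2 hH by blast
    also have "\<dots> = cinner X' s" using sp X'H by blast
    also have "\<dots> = cinner X s" using q1 sH by metis
    finally show "X \<in> Z" unfolding Z_def D_def by (simp add: cinner_diff_right)
  qed
  have "cspan G \<subseteq> Z"
  proof
    fix x assume "x \<in> cspan G"
    then obtain F c where F: "finite F" "F \<subseteq> G" and x: "x = (\<Sum>v\<in>F. scaleC (c v) v)"
      unfolding cspan_def by blast
    have "cinner x D = (\<Sum>v\<in>F. cnj (c v) * cinner v D)"
      unfolding x by (simp add: cinner_sum_left[OF F(1)] cinner_scaleC_left)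
    also have "\<dots> = 0" using F GZ unfolding Z_def by (intro sum.neutral) auto
    finally show "x \<in> Z" unfolding Z_def by simp
  qed
  moreover have "closed Z" unfolding closed_sequential_limits
  proof (intro allI impI, elim conjE)
    fix sq l assume sZ: "\<forall>n. sq n \<in> Z" and lim: "sq \<longlonglongrightarrow> l"
    have le: "cmod (cinner l D) \<le> norm (l - sq n) * norm D" for n
    proof -
      have "cinner l D = cinner (l - sq n) D" using sZ unfolding Z_def by (simp add: cinner_diff_left)
      thus ?thesis by (simp add: cauchy_schwarz)
    qed
    have "(\<lambda>n. norm (l - sq n) * norm D) \<longlonglongrightarrow> norm (l - l) * norm D" by (intro tendsto_intros lim)
    hence "cmod (cinner l D) \<le> norm (l - l) * norm D" by (rule LIMSEQ_le_const) (use le in blast)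
    thus "l \<in> Z" unfolding Z_def by simp
  qed
  ultimately have "closure (cspan G) \<subseteq> Z" by (rule closure_minimal)
  hence "D \<in> Z" using dense by auto
  hence "D = 0" unfolding Z_def by (simp add: cinner_self_zero)
  hence "a = s" unfolding D_def by simp
  thus ?thesis using sH unfolding a_def s_def by simp
qed

lemma conj_eq_sym:
  assumes "\<forall>k\<in>H. cinner k X = cinner k (Y::'a::complex_inner)"
  shows "\<forall>k\<in>H. cinner X k = cinner Y k"
  using assms by (metis cinner_conj)

theorem proposition6p3:
  fixes H :: "'a::chilbert set"
    and S1 S2 P T1 T2 V :: "'a \<Rightarrow> 'a"
  assumes "closed_csubspace H"
    and "gamma3_contraction H S1 S2 P"
  shows "(gamma3_isometric_dilation TYPE('n::chilbert) H S1 S2 P T1 T2 V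
            \<and> minimal_dilation H T1 T2 V
          \<longrightarrow> gamma3_coisometric_extension TYPE('n) H
                (adj_on H S1) (adj_on H S2) (adj_on H P)
                (adj_on UNIV T1) (adj_on UNIV T2) (adj_on UNIV V))
       \<and> (gamma3_isometry TYPE('n) UNIV T1 T2 V
            \<and> gamma3_coisometric_extension TYPE('n) H
                (adj_on H S1) (adj_on H S2) (adj_on H P)
                (adj_on UNIV T1) (adj_on UNIV T2) (adj_on UNIV V)
          \<longrightarrow> gamma3_isometric_dilation TYPE('n) H S1 S2 P T1 T2 V)"
proof -
  have H: "closed_csubspace H" using assms(1) .
  have sub: "csubspace H" using H unfolding closed_csubspace_def by auto
  have S1b: "bounded_op_on H S1" and S2b: "bounded_op_on H S2" and Pb: "bounded_op_on H P"
    and cS12: "commute_on H S1 S2" and cS1P: "commute_on H S1 P" and cS2P: "commute_on H S2 P"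
    using assms(2) unfolding gamma3_contraction_def by auto
  have SH1: "\<forall>x\<in>H. S1 x \<in> H" and SH2: "\<forall>x\<in>H. S2 x \<in> H" and PH: "\<forall>x\<in>H. P x \<in> H"
    using S1b S2b Pb unfolding bounded_op_on_def by auto
  define Sa where "Sa m1 m2 n h = (S1 ^^ m1) ((S2 ^^ m2) ((P ^^ n) h))" for m1 m2 n h
  define Ta where "Ta m1 m2 n h = (T1 ^^ m1) ((T2 ^^ m2) ((V ^^ n) h))" for m1 m2 n h
  have SaH: "Sa m1 m2 n h \<in> H" if "h \<in> H" for m1 m2 n h
    unfolding Sa_def by (intro funpow_in[OF SH1] funpow_in[OF SH2] funpow_in[OF PH] that)
  show ?thesis
  proof (intro conjI impI)
    assume a: "gamma3_isometric_dilation TYPE('n) H S1 S2 P T1 T2 V \<and> minimal_dilation H T1 T2 V"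
    have iso: "gamma3_isometry TYPE('n) UNIV T1 T2 V"
      and projf: "\<forall>m1 m2 n. \<forall>h\<in>H. proj_on H (Ta m1 m2 n h) = Sa m1 m2 n h"
      using a unfolding gamma3_isometric_dilation_def Ta_def Sa_def by auto
    have dense: "closure (cspan {Ta m1 m2 n h | m1 m2 n h. h \<in> H}) = UNIV"
      using a unfolding minimal_dilation_def Ta_def by auto
    have T1b: "bounded_op_on UNIV T1" and T2b: "bounded_op_on UNIV T2" and Vb: "bounded_op_on UNIV V"
      using iso unfolding gamma3_isometry_def by auto
    have cT: "commute_on UNIV T1 T2" "commute_on UNIV T1 V" "commute_on UNIV T2 V"
      using iso_commute[OF iso] by auto
    have cT': "commute_on UNIV T2 T1" "commute_on UNIV V T1" "commute_on UNIV V T2"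
      using cT unfolding commute_on_def by auto
    have cS': "commute_on H S2 S1" "commute_on H P S1" "commute_on H P S2"
      using cS12 cS1P cS2P unfolding commute_on_def by auto
    have Q: "\<forall>k\<in>H. cinner (Ta m1 m2 n h) k = cinner (Sa m1 m2 n h) k" if hH: "h \<in> H" for m1 m2 n h
    proof -
      have "\<forall>k\<in>H. cinner k (Ta m1 m2 n h - Sa m1 m2 n h) = 0"
        using proj_on_prop[OF H, of "Ta m1 m2 n h"] projf hH by auto
      hence "\<forall>k\<in>H. cinner k (Ta m1 m2 n h) = cinner k (Sa m1 m2 n h)"
        by (simp add: cinner_diff_right)
      thus ?thesis by (rule conj_eq_sym)
    qed
    have e1: "\<forall>h\<in>H. adj_on UNIV T1 h \<in> H \<and> adj_on UNIV T1 h = adj_on H S1 h"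
    proof
      fix h assume "h \<in> H"
      show "adj_on UNIV T1 h \<in> H \<and> adj_on UNIV T1 h = adj_on H S1 h"
      proof (rule ext_from_gen[OF H T1b S1b dense _ \<open>h \<in> H\<close>], intro ballI)
        fix X assume "X \<in> {Ta m1 m2 n h | m1 m2 n h. h \<in> H}"
        then obtain m1 m2 n h' where X: "X = Ta m1 m2 n h'" and h': "h' \<in> H" by blast
        have "T1 X = Ta (Suc m1) m2 n h'" "S1 (Sa m1 m2 n h') = Sa (Suc m1) m2 n h'"
          unfolding X Ta_def Sa_def by simp_all
        thus "\<exists>X'\<in>H. (\<forall>k\<in>H. cinner X k = cinner X' k) \<and> (\<forall>k\<in>H. cinner (T1 X) k = cinner (S1 X') k)"
          using Q[OF h'] SaH[OF h'] X by (intro bexI[of _ "Sa m1 m2 n h'"]) auto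
      qed
    qed
    have e2: "\<forall>h\<in>H. adj_on UNIV T2 h \<in> H \<and> adj_on UNIV T2 h = adj_on H S2 h"
    proof
      fix h assume "h \<in> H"
      show "adj_on UNIV T2 h \<in> H \<and> adj_on UNIV T2 h = adj_on H S2 h"
      proof (rule ext_from_gen[OF H T2b S2b dense _ \<open>h \<in> H\<close>], intro ballI)
        fix X assume "X \<in> {Ta m1 m2 n h | m1 m2 n h. h \<in> H}"
        then obtain m1 m2 n h' where X: "X = Ta m1 m2 n h'" and h': "h' \<in> H" by blast
        have in2: "(S2 ^^ m2) ((P ^^ n) h') \<in> H" by (intro funpow_in[OF SH2] funpow_in[OF PH] h')
        have "T2 X = Ta m1 (Suc m2) n h'"
          unfolding X Ta_def using funpow_commute_univ[OF cT'(1)] by simp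
        moreover have "S2 (Sa m1 m2 n h') = Sa m1 (Suc m2) n h'"
          unfolding Sa_def using funpow_commute_on[OF cS'(1) SH1 in2] by simp
        ultimately show "\<exists>X'\<in>H. (\<forall>k\<in>H. cinner X k = cinner X' k) \<and> (\<forall>k\<in>H. cinner (T2 X) k = cinner (S2 X') k)"
          using Q[OF h'] SaH[OF h'] X by (intro bexI[of _ "Sa m1 m2 n h'"]) auto
      qed
    qed
    have e3: "\<forall>h\<in>H. adj_on UNIV V h \<in> H \<and> adj_on UNIV V h = adj_on H P h"
    proof
      fix h assume "h \<in> H"
      show "adj_on UNIV V h \<in> H \<and> adj_on UNIV V h = adj_on H P h"
      proof (rule ext_from_gen[OF H Vb Pb dense _ \<open>h \<in> H\<close>], intro ballI)
        fix X assume "X \<in> {Ta m1 m2 n h | m1 m2 n h. h \<in> H}"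
        then obtain m1 m2 n h' where X: "X = Ta m1 m2 n h'" and h': "h' \<in> H" by blast
        have in2: "(S2 ^^ m2) ((P ^^ n) h') \<in> H" by (intro funpow_in[OF SH2] funpow_in[OF PH] h')
        have in3: "(P ^^ n) h' \<in> H" by (intro funpow_in[OF PH] h')
        have "V X = Ta m1 m2 (Suc n) h'"
          unfolding X Ta_def using funpow_commute_univ[OF cT'(2)] funpow_commute_univ[OF cT'(3)] by simp
        moreover have "P (Sa m1 m2 n h') = Sa m1 m2 (Suc n) h'"
          unfolding Sa_def using funpow_commute_on[OF cS'(2) SH1 in2] funpow_commute_on[OF cS'(3) SH2 in3]
          by simp
        ultimately show "\<exists>X'\<in>H. (\<forall>k\<in>H. cinner X k = cinner X' k) \<and> (\<forall>k\<in>H. cinner (V X) k = cinner (P X') k)"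
          using Q[OF h'] SaH[OF h'] X by (intro bexI[of _ "Sa m1 m2 n h'"]) auto
      qed
    qed
    have "gamma3_coisometry TYPE('n) UNIV (adj_on UNIV T1) (adj_on UNIV T2) (adj_on UNIV V)"
      unfolding gamma3_coisometry_def adj_adj[OF T1b] adj_adj[OF T2b] adj_adj[OF Vb]
      using adj_bounded[OF T1b] adj_bounded[OF T2b] adj_bounded[OF Vb] iso by simp
    thus "gamma3_coisometric_extension TYPE('n) H (adj_on H S1) (adj_on H S2) (adj_on H P)
            (adj_on UNIV T1) (adj_on UNIV T2) (adj_on UNIV V)"
      unfolding gamma3_coisometric_extension_def using e1 e2 e3 by blast
  next
    assume a: "gamma3_isometry TYPE('n) UNIV T1 T2 V \<and> gamma3_coisometric_extension TYPE('n) H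
                (adj_on H S1) (adj_on H S2) (adj_on H P)
                (adj_on UNIV T1) (adj_on UNIV T2) (adj_on UNIV V)"
    have iso: "gamma3_isometry TYPE('n) UNIV T1 T2 V" using a by simp
    have T1b: "bounded_op_on UNIV T1" and T2b: "bounded_op_on UNIV T2" and Vb: "bounded_op_on UNIV V"
      using iso unfolding gamma3_isometry_def by auto
    have e1: "\<forall>h\<in>H. adj_on UNIV T1 h \<in> H \<and> adj_on UNIV T1 h = adj_on H S1 h"
      and e2: "\<forall>h\<in>H. adj_on UNIV T2 h \<in> H \<and> adj_on UNIV T2 h = adj_on H S2 h"
      and e3: "\<forall>h\<in>H. adj_on UNIV V h \<in> H \<and> adj_on UNIV V h = adj_on H P h"
      using a unfolding gamma3_coisometric_extension_def by auto
    have "proj_on H (Ta m1 m2 n h) = Sa m1 m2 n h" if hH: "h \<in> H" for m1 m2 n h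
    proof -
      have q0: "\<forall>k\<in>H. cinner h k = cinner h k" by simp
      note i3 = iter[OF H Vb Pb e3 hH q0, of n]
      note i2 = iter[OF H T2b S2b e2 conjunct1[OF i3] conjunct2[OF i3], of m2]
      note i1 = iter[OF H T1b S1b e1 conjunct1[OF i2] conjunct2[OF i2], of m1]
      have "\<forall>k\<in>H. cinner (Ta m1 m2 n h) k = cinner (Sa m1 m2 n h) k"
        using i1 unfolding Ta_def Sa_def by simp
      hence "\<forall>z\<in>H. cinner z (Ta m1 m2 n h - Sa m1 m2 n h) = 0"
      proof (intro ballI)
        fix z assume zH: "z \<in> H" and all: "\<forall>k\<in>H. cinner (Ta m1 m2 n h) k = cinner (Sa m1 m2 n h) k"
        have "cinner z (Ta m1 m2 n h) = cnj (cinner (Ta m1 m2 n h) z)" by (rule cinner_conj)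
        also have "\<dots> = cnj (cinner (Sa m1 m2 n h) z)" using all zH by simp
        also have "\<dots> = cinner z (Sa m1 m2 n h)" by (rule cinner_conj[symmetric])
        finally show "cinner z (Ta m1 m2 n h - Sa m1 m2 n h) = 0" by (simp add: cinner_diff_right)
      qed
      thus ?thesis by (rule proj_on_eq[OF sub SaH[OF hH]])
    qed
    thus "gamma3_isometric_dilation TYPE('n) H S1 S2 P T1 T2 V"
      unfolding gamma3_isometric_dilation_def using iso unfolding Ta_def Sa_def by simp
  qed
qed

end
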